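(* Let $\Omega\subseteq\mathbb R^N$ be a bounded open set and $\alpha\in(0,1)$. For every sequence $(u_i)\subseteq\mathcal X^\alpha(\Omega)$ with $\sup_i\|u_i\|_{\mathcal X^\alpha(\Omega)}<\infty$ there exist $u\in\mathcal X^\alpha(\Omega)$ and a subsequence $(u_{i_j})$ such that $\|u_{i_j}-u\|_{\mathcal Y(\Omega)}\to0$ as $j\to\infty$, i.e. $\|u_{i_j}-u\|^{(1)}_{\mathcal L^1(\Omega)}+\|u_{i_j}-u\|_{L^\infty(\Omega)}\to0$. In particular the inclusion $\mathcal X^\alpha(\Omega)\hookrightarrow\mathcal Y(\Omega)$ is compact.
   Context: $\ell(\rho):=|\ln(\min\{\rho,1/10\})|^{-1}$ ($\rho>0$), $\ell(0):=0$. $d(x):=\operatorname{dist}(x,\partial\Omega)$, $d(x,y):=\min(d(x),d(y))$. For $\alpha,\beta\ge0$ and $u:\Omega\to\mathbb R$: $[u]_{\mathcal L^\alpha(\Omega)}:=\sup_{x\ne y\in\Omega}\frac{|u(x)-u(y)|}{\ell^\alpha(|x-y|)}$, $[u]^{(\beta)}_{\mathcal L^\alpha(\Omega)}:=\sup_{x\neq y\in\Omega}\ell^{\alpha+\beta}(d(x,y))\frac{|u(x)-u(y)|}{\ell^\alpha(|x-y|)}$, $\|u\|^{(\beta)}_{\mathcal L^\alpha(\Omega)}:=\sup_{x\in\Omega}\ell^\beta(d(x))|u(x)|+[u]^{(\beta)}_{\mathcal L^\alpha(\Omega)}$. $\mathcal X^\alpha(\Omega)$ is the space of $u:\mathbb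 R^N\to\mathbb R$ with $u=0$ in $\mathbb R^N\setminus\Omega$ and $\|u\|_{\mathcal X^\alpha(\Omega)}:=\|u\|^{(0)}_{\mathcal L^{1+\alpha}(\Omega)}+[u]_{\mathcal L^\alpha(\mathbb R^N)}<\infty$; $\mathcal Y(\Omega)$ is the space of $f:\Omega\to\mathbb R$ with $\|f\|_{\mathcal Y(\Omega)}:=\|f\|^{(1)}_{\mathcal L^1(\Omega)}+\|f\|_{L^\infty(\Omega)}<\infty$. *)

theory Defs
  imports "HOL-Analysis.Analysis"
begin

definition ell :: "real \<Rightarrow> real" where
  "ell \<rho> = (if \<rho> \<le> 0 then 0 else 1 / \<bar>ln (min \<rho> (1/10))\<bar>)"

definition dB :: "'a::euclidean_space set \<Rightarrow> 'a \<Rightarrow> real" where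
  "dB \<Omega> x = infdist x (frontier \<Omega>)"

text \<open>All (semi)norms are valued in ennreal, so that a supremum may be infinite.\<close>
definition semiL :: "real \<Rightarrow> 'a::euclidean_space set \<Rightarrow> ('a \<Rightarrow> real) \<Rightarrow> ennreal" where
  "semiL \<alpha> S u = (SUP p \<in> {(x,y). x \<in> S \<and> y \<in> S \<and> x \<noteq> y}.
      ennreal (\<bar>u (fst p) - u (snd p)\<bar> / ell (dist (fst p) (snd p)) powr \<alpha>))"

definition wsemiL :: "real \<Rightarrow> real \<Rightarrow> 'a::euclidean_space set \<Rightarrow> ('a \<Rightarrow> real) \<Rightarrow> ennreal" where
  "wsemiL \<alpha> \<beta> \<Omega> u = (SUP p \<in> {(x,y). x \<in> \<Omega> \<and> y \<in> \<Omega> \<and> x \<noteq> y}.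
      ennreal (ell (min (dB \<Omega> (fst p)) (dB \<Omega> (snd p))) powr (\<alpha> + \<beta>)
               * \<bar>u (fst p) - u (snd p)\<bar> / ell (dist (fst p) (snd p)) powr \<alpha>))"

definition wnormL :: "real \<Rightarrow> real \<Rightarrow> 'a::euclidean_space set \<Rightarrow> ('a \<Rightarrow> real) \<Rightarrow> ennreal" where
  "wnormL \<alpha> \<beta> \<Omega> u = (SUP x \<in> \<Omega>. ennreal (ell (dB \<Omega> x) powr \<beta> * \<bar>u x\<bar>)) + wsemiL \<alpha> \<beta> \<Omega> u"

definition Xnorm :: "real \<Rightarrow> 'a::euclidean_space set \<Rightarrow> ('a \<Rightarrow> real) \<Rightarrow> ennreal" where
  "Xnorm \<alpha> \<Omega> u = wnormL (1 + \<alpha>) 0 \<Omega> u + semiL \<alpha> UNIV u"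

definition Xspace :: "real \<Rightarrow> 'a::euclidean_space set \<Rightarrow> ('a \<Rightarrow> real) set" where
  "Xspace \<alpha> \<Omega> = {u. (\<forall>x. x \<notin> \<Omega> \<longrightarrow> u x = 0) \<and> Xnorm \<alpha> \<Omega> u < \<infinity>}"

text \<open>Sup norm over Omega (functions considered are continuous, so ess sup = sup).\<close>
definition supnorm :: "'a::euclidean_space set \<Rightarrow> ('a \<Rightarrow> real) \<Rightarrow> ennreal" where
  "supnorm \<Omega> f = (SUP x \<in> \<Omega>. ennreal \<bar>f x\<bar>)"

definition Ynorm :: "'a::euclidean_space set \<Rightarrow> ('a \<Rightarrow> real) \<Rightarrow> ennreal" where
  "Ynorm \<Omega> f = wnormL 1 1 \<Omega> f + supnorm \<Omega> f"

end

theory Submission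
  imports Defs "HOL-Complex_Analysis.Great_Picard"
begin

lemma ell_nonneg: "0 \<le> ell r"
  unfolding ell_def using abs_ge_zero[of "ln (min r (1/10))"] by (auto simp del: abs_ge_zero)

lemma ell_pos: "0 < r \<Longrightarrow> 0 < ell r"
proof -
  assume r: "0 < r"
  have "min r (1/10) > 0" "min r (1/10) < 1" using r by auto
  hence "ln (min r (1/10)) < 0" by simp
  thus ?thesis using r by (simp add: ell_def)
qed

lemma ell_le1: "ell r \<le> 1"
proof (cases "r \<le> 0")
  case True thus ?thesis by (simp add: ell_def)
next
  case False
  have m: "min r (1/10) > 0" "min r (1/10) \<le> 1/10" using False by auto
  hence "ln (min r (1/10)) \<le> ln (1/10)" by simp
  also have "ln (1/10::real) = - ln 10" using ln_inverse[of "10::real"] by (simp add: inverse_eq_divide)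
  finally have a: "ln (min r (1/10)) \<le> - ln 10" .
  have "exp 1 \<le> (10::real)" using exp_le by simp
  hence "1 \<le> ln (10::real)" using ln_le_cancel_iff[of "exp 1" "10::real"] by simp
  hence "1 \<le> \<bar>ln (min r (1/10))\<bar>" using a by linarith
  have X: "1 / X \<le> 1" if "1 \<le> X" for X :: real using that by (simp add: field_simps)
  have "ell r = 1 / \<bar>ln (min r (1/10))\<bar>" using False by (simp add: ell_def)
  also have "\<dots> \<le> 1" by (rule X) fact
  finally show ?thesis .
qed

lemma ell_small:
  assumes "0 < t" shows "\<exists>d>0. \<forall>r. 0 < r \<and> r < d \<longrightarrow> ell r < t"
proof (intro exI[of _ "min (1/10) (exp (-1/t))"] conjI allI impI)
  show "0 < min (1/10) (exp (-1/t))" by simp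
  fix r :: real assume r: "0 < r \<and> r < min (1/10) (exp (-1/t))"
  hence m: "min r (1/10) = r" by simp
  have "ln r < -1/t" using r by (metis exp_gt_zero ln_exp ln_less_cancel_iff min_less_iff_conj)
  hence "1/t < \<bar>ln r\<bar>" by linarith
  have X: "1 / X < t" if "1/t < X" for X :: real
  proof -
    have "0 < X" using that assms by (smt (verit) divide_pos_pos)
    thus ?thesis using that assms by (simp add: field_simps)
  qed
  have "ell r = 1 / \<bar>ln r\<bar>" using r m by (simp add: ell_def)
  also have "\<dots> < t" by (rule X) fact
  finally show "ell r < t" .
qed


lemma sup_le_extract:
  assumes "(SUP p\<in>A. ennreal (h p)) \<le> ennreal B" "0 \<le> B" "p \<in> A"
  shows "h p \<le> B"
proof -
  have "ennreal (h p) \<le> (SUP p\<in>A. ennreal (h p))" by (rule SUP_upper) fact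
  also note assms(1)
  finally show ?thesis using assms(2) by (simp add: ennreal_le_iff)
qed

lemma sup_le_build:
  assumes "\<And>p. p \<in> A \<Longrightarrow> h p \<le> B"
  shows "(SUP p\<in>A. ennreal (h p)) \<le> ennreal B"
  using assms by (intro SUP_least ennreal_leI) auto

lemma ellpow_small:
  assumes "0 < a" "0 < e" shows "\<exists>d>0. \<forall>r. 0 < r \<and> r < d \<longrightarrow> ell r powr a < e"
proof -
  define t where "t = e powr (1/a)"
  have t: "0 < t" using assms by (simp add: t_def)
  obtain d where d: "d > 0" "\<And>r. 0 < r \<and> r < d \<Longrightarrow> ell r < t" using ell_small[OF t] by blast
  have "ell r powr a < e" if "0 < r \<and> r < d" for r
  proof -
    have "ell r powr a < t powr a" using d(2)[OF that] ell_nonneg assms(1) by (intro powr_less_mono2) auto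
    also have "t powr a = e" using assms by (simp add: t_def powr_powr)
    finally show ?thesis .
  qed
  thus ?thesis using d(1) by blast
qed

lemma key_ineq:
  fixes E L D C e \<delta> a :: real
  assumes "0 \<le> E" "E \<le> 1" "0 < L" "0 < \<delta>" "0 < a" "a < 1" "0 \<le> D"
    and h: "E powr (1+a) * D / L powr (1+a) \<le> C" and "D \<le> e"
  shows "E powr 2 * D / L \<le> C * \<delta> powr a + e / \<delta>"
proof -
  have C0: "0 \<le> C" using h assms by (smt (verit) divide_nonneg_nonneg mult_nonneg_nonneg powr_ge_zero)
  have e0: "0 \<le> e" using assms by linarith
  have E2: "E powr 2 \<le> 1" using assms by (simp add: power_le_one)
  show ?thesis
  proof (cases "L \<le> \<delta>")
    case True
    have eq: "E powr 2 * D / L = E powr (1-a) * (E powr (1+a) * D / L powr (1+a)) * L powr a"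
    proof -
      have "E powr 2 = E powr (1-a) * E powr (1+a)" by (simp flip: powr_add)
      moreover have "L powr (1+a) = L * L powr a" using assms by (simp add: powr_add)
      ultimately show ?thesis using assms by (simp add: field_simps)
    qed
    have "E powr (1-a) \<le> 1" using assms by (intro powr_le1) auto
    moreover have "L powr a \<le> \<delta> powr a" using True assms by (intro powr_mono2) auto
    ultimately have "E powr (1-a) * (E powr (1+a) * D / L powr (1+a)) * L powr a \<le> 1 * C * \<delta> powr a"
      using h assms C0 by (intro mult_mono) auto
    moreover have "0 \<le> e / \<delta>" using e0 assms by simp
    ultimately show ?thesis using eq by simp
  next
    case False
    have "E powr 2 * D / L \<le> D / L" using E2 assms by (simp add: divide_right_mono mult_left_le_one_le)
    also have "\<dots> \<le> e / \<delta>" using False assms by (intro frac_le) auto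
    finally show ?thesis using C0 by (smt (verit) mult_nonneg_nonneg powr_ge_zero)
  qed
qed

lemma ennreal_tendsto0I:
  fixes f :: "nat \<Rightarrow> ennreal"
  assumes "\<And>\<eta>. 0 < \<eta> \<Longrightarrow> eventually (\<lambda>j. f j \<le> ennreal \<eta>) sequentially"
  shows "(f \<longlongrightarrow> 0) sequentially"
proof (rule order_tendstoI)
  fix a :: ennreal assume "a < 0" thus "eventually (\<lambda>j. a < f j) sequentially" by (metis zero_le leD)
next
  fix a :: ennreal assume a: "0 < a"
  obtain b where b: "0 < b" "b < a" using dense[OF a] by blast
  have bt: "b < top" using b(2) top_greatest by (rule less_le_trans)
  have bb: "ennreal (enn2real b) = b" by (rule ennreal_enn2real[OF bt])
  have "0 < enn2real b" using b(1) bt by (simp only: enn2real_positive_iff) 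
  from assms[OF this] show "eventually (\<lambda>j. f j < a) sequentially"
  proof (rule eventually_mono)
    fix j assume "f j \<le> ennreal (enn2real b)"
    hence "f j \<le> b" unfolding bb .
    thus "f j < a" using b(2) by (rule le_less_trans)
  qed
qed


lemma Xnorm_parts:
  fixes f :: "'a::euclidean_space \<Rightarrow> real"
  assumes "Xnorm a \<Omega> f \<le> ennreal B" "0 \<le> B"
  shows "\<And>x y. x \<noteq> y \<Longrightarrow> \<bar>f x - f y\<bar> / ell (dist x y) powr a \<le> B"
    and "\<And>x y. x \<in> \<Omega> \<Longrightarrow> y \<in> \<Omega> \<Longrightarrow> x \<noteq> y \<Longrightarrow>
          ell (min (dB \<Omega> x) (dB \<Omega> y)) powr (1 + a) * \<bar>f x - f y\<bar> / ell (dist x y) powr (1 + a) \<le> B"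
proof -
  fix x y :: 'a assume xy: "x \<noteq> y"
  have "semiL a UNIV f \<le> Xnorm a \<Omega> f" unfolding Xnorm_def by (simp add: add_increasing)
  hence "semiL a UNIV f \<le> ennreal B" using assms(1) by (rule order_trans)
  hence "(SUP p\<in>{(x,y). x \<in> UNIV \<and> y \<in> UNIV \<and> x \<noteq> y}.
      ennreal (\<bar>f (fst p) - f (snd p)\<bar> / ell (dist (fst p) (snd p)) powr a)) \<le> ennreal B"
    unfolding semiL_def .
  from sup_le_extract[OF this assms(2), of "(x,y)"] xy
  show "\<bar>f x - f y\<bar> / ell (dist x y) powr a \<le> B" by simp
next
  fix x y :: 'a assume xy: "x \<in> \<Omega>" "y \<in> \<Omega>" "x \<noteq> y"
  have "wsemiL (1+a) 0 \<Omega> f \<le> Xnorm a \<Omega> f" unfolding Xnorm_def wnormL_def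
    by (simp add: add_increasing add_increasing2)
  hence "wsemiL (1+a) 0 \<Omega> f \<le> ennreal B" using assms(1) by (rule order_trans)
  hence "(SUP p \<in> {(x,y). x \<in> \<Omega> \<and> y \<in> \<Omega> \<and> x \<noteq> y}.
      ennreal (ell (min (dB \<Omega> (fst p)) (dB \<Omega> (snd p))) powr ((1+a) + 0)
               * \<bar>f (fst p) - f (snd p)\<bar> / ell (dist (fst p) (snd p)) powr (1+a))) \<le> ennreal B"
    unfolding wsemiL_def .
  from sup_le_extract[OF this assms(2), of "(x,y)"] xy
  show "ell (min (dB \<Omega> x) (dB \<Omega> y)) powr (1 + a) * \<bar>f x - f y\<bar> / ell (dist x y) powr (1 + a) \<le> B"
    by simp
qed

theorem lemma7p4:
  fixes \<Omega> :: "'a::euclidean_space set" and \<alpha> :: real and u :: "nat \<Rightarrow> 'a \<Rightarrow> real"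
  assumes "open \<Omega>" and "bounded \<Omega>" and "0 < \<alpha>" and "\<alpha> < 1"
    and "\<And>i. u i \<in> Xspace \<alpha> \<Omega>"
    and "(SUP i. Xnorm \<alpha> \<Omega> (u i)) < \<infinity>"
  shows "\<exists>v \<in> Xspace \<alpha> \<Omega>. \<exists>r::nat \<Rightarrow> nat. strict_mono r \<and>
           ((\<lambda>j. Ynorm \<Omega> (\<lambda>x. u (r j) x - v x)) \<longlongrightarrow> 0) sequentially"
proof -
  define M where "M = (SUP i. Xnorm \<alpha> \<Omega> (u i))"
  have Mt: "M < top" using assms(6) M_def by simp
  define B where "B = enn2real M"
  have B0: "0 \<le> B" by (simp add: B_def)
  have MB: "M = ennreal B" unfolding B_def using Mt by simp
  have XB: "Xnorm \<alpha> \<Omega> (u i) \<le> ennreal B" for i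
    unfolding MB[symmetric] M_def by (rule SUP_upper) simp
  have semi: "\<And>i x y. x \<noteq> y \<Longrightarrow> \<bar>u i x - u i y\<bar> / ell (dist x y) powr \<alpha> \<le> B"
    using Xnorm_parts(1)[OF XB B0] by blast
  have wsemi: "\<And>i x y. x \<in> \<Omega> \<Longrightarrow> y \<in> \<Omega> \<Longrightarrow> x \<noteq> y \<Longrightarrow>
          ell (min (dB \<Omega> x) (dB \<Omega> y)) powr (1 + \<alpha>) * \<bar>u i x - u i y\<bar> / ell (dist x y) powr (1 + \<alpha>) \<le> B"
    using Xnorm_parts(2)[OF XB B0] by blast
  have out: "\<And>i x. x \<notin> \<Omega> \<Longrightarrow> u i x = 0" using assms(5) unfolding Xspace_def by blast
  obtain y0 where y0: "y0 \<notin> \<Omega>" using assms(2) not_bounded_UNIV by (metis bounded_subset subsetI)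
  have ellpos: "0 < ell (dist x y) powr \<alpha>" if "x \<noteq> y" for x y :: 'a
    using ell_pos[of "dist x y"] that by simp
  have semi': "\<bar>u i x - u i y\<bar> \<le> B * ell (dist x y) powr \<alpha>" for i x y
  proof (cases "x = y")
    case True thus ?thesis using B0 by simp
  next
    case False
    thus ?thesis using semi[OF False, of i] ellpos[OF False] by (simp add: divide_le_eq)
  qed
  have ellpow1: "ell r powr \<alpha> \<le> 1" for r using ell_nonneg ell_le1 assms(3) by (intro powr_le1) auto
  have bnd: "\<bar>u i x\<bar> \<le> B" for i x
  proof (cases "x \<in> \<Omega>")
    case False thus ?thesis using out B0 by simp
  next
    case True
    have "\<bar>u i x\<bar> = \<bar>u i x - u i y0\<bar>" using out[OF y0] by simp
    also have "\<dots> \<le> B * ell (dist x y0) powr \<alpha>" by (rule semi')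
    also have "\<dots> \<le> B * 1" using ellpow1 B0 by (intro mult_left_mono) auto
    finally show ?thesis by simp
  qed
  have equi: "\<exists>d>0. \<forall>i x y. dist x y < d \<longrightarrow> \<bar>u i x - u i y\<bar> < e" if e: "0 < e" for e
  proof -
    obtain d where d: "d > 0" "\<And>r. 0 < r \<and> r < d \<Longrightarrow> ell r powr \<alpha> < e / (B + 1)"
      using ellpow_small[OF assms(3), of "e / (B+1)"] e B0 by auto
    have "\<bar>u i x - u i y\<bar> < e" if "dist x y < d" for i x y
    proof (cases "x = y")
      case True thus ?thesis using e by simp
    next
      case False
      have "\<bar>u i x - u i y\<bar> \<le> B * ell (dist x y) powr \<alpha>" by (rule semi')
      also have "\<dots> \<le> B * (e / (B+1))" using d(2)[of "dist x y"] False that B0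
        by (intro mult_left_mono) auto
      also have "\<dots> < e" using B0 e by (simp add: field_simps)
      finally show ?thesis .
    qed
    thus ?thesis using d(1) by blast
  qed
  obtain c R where cR: "\<Omega> \<subseteq> cball c R" using assms(2) unfolding bounded_subset_cball by blast
  obtain g k where k: "strict_mono (k :: nat \<Rightarrow> nat)"
    and unifS: "\<And>e. 0 < e \<Longrightarrow> \<exists>N. \<forall>n x. n \<ge> N \<and> x \<in> cball c R \<longrightarrow> norm (u (k n) x - g x) < e"
  proof (rule Arzela_Ascoli[of "cball c R" u B])
    show "compact (cball c R)" by simp
    show "norm (u n x) \<le> B" for n x using bnd by simp
    show "\<exists>d. 0 < d \<and> (\<forall>n y. y \<in> cball c R \<and> norm (x - y) < d \<longrightarrow> norm (u n x - u n y) < e)"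
      if "0 < e" for x e using equi[OF that] by (auto simp: dist_norm)
  qed blast
  define v where "v x = (if x \<in> \<Omega> then g x else 0)" for x
  have unif: "\<exists>N. \<forall>n\<ge>N. \<forall>x. \<bar>u (k n) x - v x\<bar> < e" if e0: "0 < e" for e
  proof -
    obtain N where N: "\<forall>n x. n \<ge> N \<and> x \<in> cball c R \<longrightarrow> norm (u (k n) x - g x) < e"
      using unifS[OF e0] by blast
    have "\<bar>u (k n) x - v x\<bar> < e" if "n \<ge> N" for n x
    proof (cases "x \<in> \<Omega>")
      case True thus ?thesis using N that cR by (auto simp: v_def)
    next
      case False thus ?thesis using out \<open>0 < e\<close> by (simp add: v_def)
    qed
    thus ?thesis by blast
  qed
  have conv: "(\<lambda>n. u (k n) x) \<longlonglongrightarrow> v x" for x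
  proof (rule LIMSEQ_I)
    fix e :: real assume "0 < e"
    then obtain N where "\<forall>n\<ge>N. \<forall>x. \<bar>u (k n) x - v x\<bar> < e" using unif by blast
    thus "\<exists>N. \<forall>n\<ge>N. norm (u (k n) x - v x) < e" by auto
  qed
  have limle: "c0 * \<bar>v x - v y\<bar> / c1 \<le> C"
    if "\<And>n. c0 * \<bar>u (k n) x - u (k n) y\<bar> / c1 \<le> C" for c0 c1 C x y
  proof (rule tendsto_upperbound)
    show "(\<lambda>n. c0 * \<bar>u (k n) x - u (k n) y\<bar> / c1) \<longlonglongrightarrow> c0 * \<bar>v x - v y\<bar> / c1"
      unfolding divide_inverse by (intro tendsto_intros conv)
    show "\<forall>\<^sub>F n in sequentially. c0 * \<bar>u (k n) x - u (k n) y\<bar> / c1 \<le> C"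
      using that by simp
  qed simp
  have vout: "v x = 0" if "x \<notin> \<Omega>" for x using that by (simp add: v_def)
  have vbnd: "\<bar>v x\<bar> \<le> B" for x
    using limle[of 1 x y0 1 B] bnd vout[OF y0] out[OF y0] by simp
  have vsemi: "\<bar>v x - v y\<bar> / ell (dist x y) powr \<alpha> \<le> B" if "x \<noteq> y" for x y
    using limle[of 1 x y "ell (dist x y) powr \<alpha>" B] semi[OF that] by simp
  have vwsemi: "ell (min (dB \<Omega> x) (dB \<Omega> y)) powr (1 + \<alpha>) * \<bar>v x - v y\<bar> / ell (dist x y) powr (1 + \<alpha>) \<le> B"
    if "x \<in> \<Omega>" "y \<in> \<Omega>" "x \<noteq> y" for x y
    using limle[of "ell (min (dB \<Omega> x) (dB \<Omega> y)) powr (1 + \<alpha>)" x y "ell (dist x y) powr (1 + \<alpha>)" B]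
      wsemi[OF that] by simp
  have vX: "v \<in> Xspace \<alpha> \<Omega>"
  proof -
    have p0: "ell r powr 0 \<le> 1" for r by (simp add: powr_def)
    have A: "(SUP x\<in>\<Omega>. ennreal (ell (dB \<Omega> x) powr 0 * \<bar>v x\<bar>)) \<le> ennreal B"
    proof (rule sup_le_build)
      fix x
      have "ell (dB \<Omega> x) powr 0 * \<bar>v x\<bar> \<le> 1 * \<bar>v x\<bar>"
        by (rule mult_right_mono[OF p0 abs_ge_zero])
      also have "\<dots> \<le> B" using vbnd[of x] by simp
      finally show "ell (dB \<Omega> x) powr 0 * \<bar>v x\<bar> \<le> B" .
    qed
    have W: "wsemiL (1 + \<alpha>) 0 \<Omega> v \<le> ennreal B"
      unfolding wsemiL_def
      by (rule sup_le_build, clarify, simp only: fst_conv snd_conv add_0_right, rule vwsemi, assumption+)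
    have S: "semiL \<alpha> UNIV v \<le> ennreal B"
      unfolding semiL_def
      by (rule sup_le_build, clarify, simp only: fst_conv snd_conv, rule vsemi, assumption+)
    have "Xnorm \<alpha> \<Omega> v \<le> ennreal B + ennreal B + ennreal B"
      unfolding Xnorm_def wnormL_def using A W S by (intro add_mono)
    also have "\<dots> < \<infinity>" by simp
    finally show ?thesis unfolding Xspace_def using vout by blast
  qed
  have lim: "((\<lambda>j. Ynorm \<Omega> (\<lambda>x. u (k j) x - v x)) \<longlongrightarrow> 0) sequentially"
  proof (rule ennreal_tendsto0I)
    fix \<eta> :: real assume eta: "0 < \<eta>"
    define \<delta> where "\<delta> = (\<eta> / (8*B+8)) powr (1/\<alpha>)"
    have d0: "0 < \<delta>" using eta B0 by (simp add: \<delta>_def)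
    have dpow: "\<delta> powr \<alpha> = \<eta> / (8*B+8)" using eta B0 assms(3) by (simp add: \<delta>_def powr_powr)
    define e where "e = min (\<eta>/8) (\<eta> * \<delta> / 8)"
    have e0: "0 < e" using eta d0 by (simp add: e_def)
    obtain N where N: "\<forall>n\<ge>N. \<forall>x. \<bar>u (k n) x - v x\<bar> < e" using unif[OF e0] by blast
    show "eventually (\<lambda>j. Ynorm \<Omega> (\<lambda>x. u (k j) x - v x) \<le> ennreal \<eta>) sequentially"
      unfolding eventually_sequentially
    proof (intro exI allI impI)
      fix j assume j: "N \<le> j"
      define w where "w x = u (k j) x - v x" for x
      have wb: "\<bar>w x\<bar> \<le> e" for x using N j by (auto simp: w_def intro: less_imp_le)
      have T1: "(SUP x\<in>\<Omega>. ennreal (ell (dB \<Omega> x) powr 1 * \<bar>w x\<bar>)) \<le> ennreal e"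
      proof (rule sup_le_build)
        fix x
        have "ell (dB \<Omega> x) powr 1 * \<bar>w x\<bar> \<le> 1 * e"
          using ell_nonneg ell_le1 wb by (intro mult_mono) auto
        thus "ell (dB \<Omega> x) powr 1 * \<bar>w x\<bar> \<le> e" by simp
      qed
      have T3: "supnorm \<Omega> w \<le> ennreal e" unfolding supnorm_def by (rule sup_le_build) (rule wb)
      have T2: "wsemiL 1 1 \<Omega> w \<le> ennreal (2 * B * \<delta> powr \<alpha> + 2 * e / \<delta>)"
        unfolding wsemiL_def
      proof (rule sup_le_build, clarify)
        fix x y assume xy: "x \<in> \<Omega>" "y \<in> \<Omega>" "x \<noteq> y"
        let ?E = "ell (min (dB \<Omega> x) (dB \<Omega> y))"
        let ?L = "ell (dist x y)"
        have L0: "0 < ?L" using xy by (simp add: ell_pos)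
        have split: "\<bar>w x - w y\<bar> \<le> \<bar>u (k j) x - u (k j) y\<bar> + \<bar>v x - v y\<bar>"
          unfolding w_def by linarith
        have "?E powr (1+\<alpha>) * \<bar>w x - w y\<bar> / ?L powr (1+\<alpha>)
            \<le> ?E powr (1+\<alpha>) * (\<bar>u (k j) x - u (k j) y\<bar> + \<bar>v x - v y\<bar>) / ?L powr (1+\<alpha>)"
          using split L0 by (intro divide_right_mono mult_left_mono) auto
        also have "\<dots> = ?E powr (1+\<alpha>) * \<bar>u (k j) x - u (k j) y\<bar> / ?L powr (1+\<alpha>)
                     + ?E powr (1+\<alpha>) * \<bar>v x - v y\<bar> / ?L powr (1+\<alpha>)"
          by (simp add: add_divide_distrib distrib_left)
        also have "\<dots> \<le> B + B" using wsemi[OF xy] vwsemi[OF xy] by (intro add_mono)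
        finally have h: "?E powr (1+\<alpha>) * \<bar>w x - w y\<bar> / ?L powr (1+\<alpha>) \<le> 2 * B" by simp
        have D: "\<bar>w x - w y\<bar> \<le> 2 * e" using wb[of x] wb[of y] by linarith
        have "?E powr 2 * \<bar>w x - w y\<bar> / ?L \<le> 2 * B * \<delta> powr \<alpha> + 2 * e / \<delta>"
          by (rule key_ineq[OF ell_nonneg ell_le1 L0 d0 assms(3) assms(4) abs_ge_zero h D])
        thus "ell (min (dB \<Omega> (fst (x, y))) (dB \<Omega> (snd (x, y)))) powr (1 + 1) *
           \<bar>w (fst (x, y)) - w (snd (x, y))\<bar> / ell (dist (fst (x, y)) (snd (x, y))) powr 1
           \<le> 2 * B * \<delta> powr \<alpha> + 2 * e / \<delta>"
          using L0 by simp
      qed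
      have sum: "e + (2 * B * \<delta> powr \<alpha> + 2 * e / \<delta>) + e \<le> \<eta>"
      proof -
        have "2 * B * \<delta> powr \<alpha> = 2 * B * \<eta> / (8*B+8)" using dpow by simp
        also have "\<dots> \<le> \<eta> / 4" using B0 eta by (simp add: field_simps)
        finally have "2 * B * \<delta> powr \<alpha> \<le> \<eta> / 4" .
        moreover have "2 * e / \<delta> \<le> \<eta> / 4" using d0 eta unfolding e_def
          by (simp add: field_simps min_def)
        moreover have "e \<le> \<eta> / 8" by (simp add: e_def)
        ultimately show ?thesis using eta by linarith
      qed
      have "Ynorm \<Omega> w \<le> ennreal e + ennreal (2 * B * \<delta> powr \<alpha> + 2 * e / \<delta>) + ennreal e"
        unfolding Ynorm_def wnormL_def using T1 T2 T3 by (intro add_mono) auto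
      also have "\<dots> = ennreal (e + (2 * B * \<delta> powr \<alpha> + 2 * e / \<delta>) + e)"
        using e0 d0 B0 by (simp add: ennreal_plus[symmetric] del: ennreal_plus)
      also have "\<dots> \<le> ennreal \<eta>" using sum by (rule ennreal_leI)
      finally show "Ynorm \<Omega> (\<lambda>x. u (k j) x - v x) \<le> ennreal \<eta>" unfolding w_def .
    qed
  qed
  show ?thesis using vX k lim by blast
qed

end
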